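(* Let $\{R_\alpha\}$ be a collection of $\star$-rings and let $R=\prod_\alpha R_\alpha$ with componentwise involution. Then $R$ is weakly $\star$-clean if and only if each $R_\alpha$ is weakly $\star$-clean and at most one $R_\alpha$ is not $\star$-clean.
   Context: Rings are associative with identity. A $\star$-ring is a ring with a map $\star$ satisfying $(x+y)^\star=x^\star+y^\star$, $(xy)^\star=y^\star x^\star$, $(x^\star)^\star=x$. A projection is $p$ with $p^2=p=p^\star$; $P(R)$ is the set of projections, $U(R)$ the units. $R$ is $\star$-clean if every element is $u+p$ with $u\in U(R)$, $p\in P(R)$. An element $x$ is weakly $\star$-clean if $x=u+p$ or $x=u-p$ with $u\in U(R)$, $p\in P(R)$; $R$ is weakly $\star$-clean if all its elements are. *)

theory Defs
  imports "HOL-Algebra.Ring" "HOL-Library.FuncSet"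
begin

definition star_ring :: "('a, 'b) ring_scheme \<Rightarrow> ('a \<Rightarrow> 'a) \<Rightarrow> bool" where
  "star_ring R s \<longleftrightarrow> ring R \<and> s \<in> carrier R \<rightarrow> carrier R \<and>
     (\<forall>x\<in>carrier R. \<forall>y\<in>carrier R. s (x \<oplus>\<^bsub>R\<^esub> y) = s x \<oplus>\<^bsub>R\<^esub> s y) \<and>
     (\<forall>x\<in>carrier R. \<forall>y\<in>carrier R. s (x \<otimes>\<^bsub>R\<^esub> y) = s y \<otimes>\<^bsub>R\<^esub> s x) \<and>
     (\<forall>x\<in>carrier R. s (s x) = x)"

definition is_projection :: "('a, 'b) ring_scheme \<Rightarrow> ('a \<Rightarrow> 'a) \<Rightarrow> 'a \<Rightarrow> bool" where
  "is_projection R s p \<longleftrightarrow> p \<in> carrier R \<and> p \<otimes>\<^bsub>R\<^esub> p = p \<and> s p = p"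

definition star_clean :: "('a, 'b) ring_scheme \<Rightarrow> ('a \<Rightarrow> 'a) \<Rightarrow> bool" where
  "star_clean R s \<longleftrightarrow> (\<forall>x\<in>carrier R. \<exists>u\<in>Units R. \<exists>p. is_projection R s p \<and> x = u \<oplus>\<^bsub>R\<^esub> p)"

definition weakly_star_clean_elem :: "('a, 'b) ring_scheme \<Rightarrow> ('a \<Rightarrow> 'a) \<Rightarrow> 'a \<Rightarrow> bool" where
  "weakly_star_clean_elem R s x \<longleftrightarrow>
     (\<exists>u\<in>Units R. \<exists>p. is_projection R s p \<and> (x = u \<oplus>\<^bsub>R\<^esub> p \<or> x = u \<ominus>\<^bsub>R\<^esub> p))"

definition weakly_star_clean :: "('a, 'b) ring_scheme \<Rightarrow> ('a \<Rightarrow> 'a) \<Rightarrow> bool" where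
  "weakly_star_clean R s \<longleftrightarrow> (\<forall>x\<in>carrier R. weakly_star_clean_elem R s x)"

definition prod_ring :: "'i set \<Rightarrow> ('i \<Rightarrow> ('a, 'b) ring_scheme) \<Rightarrow> ('i \<Rightarrow> 'a) ring" where
  "prod_ring I R = \<lparr> carrier = (\<Pi>\<^sub>E i\<in>I. carrier (R i)),
     monoid.mult = (\<lambda>x y. \<lambda>i\<in>I. x i \<otimes>\<^bsub>R i\<^esub> y i),
     one = (\<lambda>i\<in>I. \<one>\<^bsub>R i\<^esub>),
     zero = (\<lambda>i\<in>I. \<zero>\<^bsub>R i\<^esub>),
     add = (\<lambda>x y. \<lambda>i\<in>I. x i \<oplus>\<^bsub>R i\<^esub> y i) \<rparr>"

definition prod_star :: "'i set \<Rightarrow> ('i \<Rightarrow> 'a \<Rightarrow> 'a) \<Rightarrow> ('i \<Rightarrow> 'a) \<Rightarrow> ('i \<Rightarrow> 'a)" where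
  "prod_star I s = (\<lambda>x. \<lambda>i\<in>I. s i (x i))"

end

theory Submission
  imports Defs
begin

lemma ring_units_neg:
  fixes R (structure)
  assumes "ring R" "u \<in> Units R" shows "\<ominus>\<^bsub>R\<^esub> u \<in> Units R"
proof -
  interpret ring R by fact
  have uc: "u \<in> carrier R" using assms(2) by (simp add: Units_def)
  have "\<ominus> u = (\<ominus> \<one>) \<otimes> u" using uc by (simp add: l_minus)
  thus ?thesis using assms(2) Units_minus_one_closed Units_m_closed by simp
qed

lemma pr_carrier: "carrier (prod_ring I R) = (\<Pi>\<^sub>E i\<in>I. carrier (R i))"
  by (simp add: prod_ring_def)

lemma pr_add: "x \<oplus>\<^bsub>prod_ring I R\<^esub> y = (\<lambda>i\<in>I. x i \<oplus>\<^bsub>R i\<^esub> y i)"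
  by (simp add: prod_ring_def)

lemma pr_mult: "x \<otimes>\<^bsub>prod_ring I R\<^esub> y = (\<lambda>i\<in>I. x i \<otimes>\<^bsub>R i\<^esub> y i)"
  by (simp add: prod_ring_def)

lemma pr_one: "\<one>\<^bsub>prod_ring I R\<^esub> = (\<lambda>i\<in>I. \<one>\<^bsub>R i\<^esub>)"
  by (simp add: prod_ring_def)

lemma pr_zero: "\<zero>\<^bsub>prod_ring I R\<^esub> = (\<lambda>i\<in>I. \<zero>\<^bsub>R i\<^esub>)"
  by (simp add: prod_ring_def)

lemma rh_neg_closed: "ring R \<Longrightarrow> x \<in> carrier R \<Longrightarrow> \<ominus>\<^bsub>R\<^esub> x \<in> carrier R"
  by (rule abelian_group.a_inv_closed[OF ring.is_abelian_group])
lemma rh_r_neg: "ring R \<Longrightarrow> x \<in> carrier R \<Longrightarrow> x \<oplus>\<^bsub>R\<^esub> \<ominus>\<^bsub>R\<^esub> x = \<zero>\<^bsub>R\<^esub>"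
  by (rule abelian_group.r_neg[OF ring.is_abelian_group])
lemma rh_l_neg: "ring R \<Longrightarrow> x \<in> carrier R \<Longrightarrow> \<ominus>\<^bsub>R\<^esub> x \<oplus>\<^bsub>R\<^esub> x = \<zero>\<^bsub>R\<^esub>"
  by (rule abelian_group.l_neg[OF ring.is_abelian_group])
lemma rh_zero_closed: "ring R \<Longrightarrow> \<zero>\<^bsub>R\<^esub> \<in> carrier R"
  by (rule abelian_monoid.zero_closed[OF abelian_group.axioms(1)[OF ring.is_abelian_group]])
lemma rh_neg_unique: "ring R \<Longrightarrow> x \<in> carrier R \<Longrightarrow> z \<in> carrier R \<Longrightarrow> x \<oplus>\<^bsub>R\<^esub> z = \<zero>\<^bsub>R\<^esub> \<Longrightarrow> \<ominus>\<^bsub>R\<^esub> x = z"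
  by (metis abelian_group.minus_equality abelian_monoid.a_comm abelian_group.axioms(1) ring.is_abelian_group)

lemma prod_neg:
  assumes rings: "\<forall>i\<in>I. ring (R i)" and x: "x \<in> carrier (prod_ring I R)"
  shows "\<ominus>\<^bsub>prod_ring I R\<^esub> x = (\<lambda>i\<in>I. \<ominus>\<^bsub>R i\<^esub> x i)"
proof -
  let ?y = "(\<lambda>i\<in>I. \<ominus>\<^bsub>R i\<^esub> x i)"
  have xi: "\<And>i. i \<in> I \<Longrightarrow> x i \<in> carrier (R i)" using x by (auto simp: pr_carrier)
  have yc: "?y \<in> carrier (prod_ring I R)"
    using xi rings by (auto simp: pr_carrier intro: rh_neg_closed)
  have P: "?y \<in> carrier (prod_ring I R) \<and> x \<oplus>\<^bsub>prod_ring I R\<^esub> ?y = \<zero>\<^bsub>prod_ring I R\<^esub>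
        \<and> ?y \<oplus>\<^bsub>prod_ring I R\<^esub> x = \<zero>\<^bsub>prod_ring I R\<^esub>"
    using yc xi rings by (auto simp: pr_add pr_zero rh_r_neg rh_l_neg intro!: ext)
  have U: "z = ?y" if z: "z \<in> carrier (prod_ring I R)" "x \<oplus>\<^bsub>prod_ring I R\<^esub> z = \<zero>\<^bsub>prod_ring I R\<^esub>" for z
  proof (rule ext)
    fix i show "z i = ?y i"
    proof (cases "i \<in> I")
      case True
      have zi: "z i \<in> carrier (R i)" using z(1) True by (auto simp: pr_carrier)
      have "x i \<oplus>\<^bsub>R i\<^esub> z i = \<zero>\<^bsub>R i\<^esub>" using fun_cong[OF z(2), of i] True
        by (simp add: pr_add pr_zero)
      hence "\<ominus>\<^bsub>R i\<^esub> x i = z i" using rings True xi zi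
        by (simp add: rh_neg_unique)
      thus ?thesis using True by simp
    next
      case False thus ?thesis using z(1) by (auto simp: pr_carrier PiE_def extensional_def)
    qed
  qed
  show ?thesis
    apply (simp only: a_inv_def[of "prod_ring I R"] m_inv_def[of "add_monoid (prod_ring I R)"])
    apply (rule the_equality)
    subgoal using P by simp
    subgoal for z by (rule U) auto
    done
qed

lemma prod_minus:
  assumes rings: "\<forall>i\<in>I. ring (R i)" and p: "p \<in> carrier (prod_ring I R)"
  shows "x \<ominus>\<^bsub>prod_ring I R\<^esub> p = (\<lambda>i\<in>I. x i \<ominus>\<^bsub>R i\<^esub> p i)"
  using prod_neg[OF assms] by (auto simp: a_minus_def pr_add intro!: ext)

lemma prod_units:
  "u \<in> Units (prod_ring I R) \<longleftrightarrow> u \<in> carrier (prod_ring I R) \<and> (\<forall>i\<in>I. u i \<in> Units (R i))"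
proof
  assume u: "u \<in> Units (prod_ring I R)"
  then obtain v where v: "v \<in> carrier (prod_ring I R)" "v \<otimes>\<^bsub>prod_ring I R\<^esub> u = \<one>\<^bsub>prod_ring I R\<^esub>"
     "u \<otimes>\<^bsub>prod_ring I R\<^esub> v = \<one>\<^bsub>prod_ring I R\<^esub>" and uc: "u \<in> carrier (prod_ring I R)"
    by (auto simp: Units_def)
  have "u i \<in> Units (R i)" if i: "i \<in> I" for i
  proof -
    have "v i \<otimes>\<^bsub>R i\<^esub> u i = \<one>\<^bsub>R i\<^esub>" "u i \<otimes>\<^bsub>R i\<^esub> v i = \<one>\<^bsub>R i\<^esub>"
      using fun_cong[OF v(2), of i] fun_cong[OF v(3), of i] i by (auto simp: pr_mult pr_one)
    thus ?thesis using v(1) uc i by (auto simp: Units_def pr_carrier)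
  qed
  thus "u \<in> carrier (prod_ring I R) \<and> (\<forall>i\<in>I. u i \<in> Units (R i))" using uc by auto
next
  assume a: "u \<in> carrier (prod_ring I R) \<and> (\<forall>i\<in>I. u i \<in> Units (R i))"
  hence "\<forall>i\<in>I. \<exists>w\<in>carrier (R i). w \<otimes>\<^bsub>R i\<^esub> u i = \<one>\<^bsub>R i\<^esub> \<and> u i \<otimes>\<^bsub>R i\<^esub> w = \<one>\<^bsub>R i\<^esub>"
    by (auto simp: Units_def)
  then obtain f where f: "\<forall>i\<in>I. f i \<in> carrier (R i) \<and> f i \<otimes>\<^bsub>R i\<^esub> u i = \<one>\<^bsub>R i\<^esub> \<and> u i \<otimes>\<^bsub>R i\<^esub> f i = \<one>\<^bsub>R i\<^esub>"
    by metis
  let ?v = "\<lambda>i\<in>I. f i"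
  have "?v \<in> carrier (prod_ring I R)" using f by (auto simp: pr_carrier)
  moreover have "?v \<otimes>\<^bsub>prod_ring I R\<^esub> u = \<one>\<^bsub>prod_ring I R\<^esub>" "u \<otimes>\<^bsub>prod_ring I R\<^esub> ?v = \<one>\<^bsub>prod_ring I R\<^esub>"
    using f by (auto simp: pr_mult pr_one intro!: ext)
  ultimately show "u \<in> Units (prod_ring I R)" using a by (auto simp: Units_def)
qed

lemma prod_proj:
  "is_projection (prod_ring I R) (prod_star I s) p \<longleftrightarrow>
     p \<in> carrier (prod_ring I R) \<and> (\<forall>i\<in>I. is_projection (R i) (s i) (p i))"
proof
  assume a: "is_projection (prod_ring I R) (prod_star I s) p"
  hence pc: "p \<in> carrier (prod_ring I R)" and m: "p \<otimes>\<^bsub>prod_ring I R\<^esub> p = p" and st: "prod_star I s p = p"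
    by (auto simp: is_projection_def)
  have "is_projection (R i) (s i) (p i)" if i: "i \<in> I" for i
    using fun_cong[OF m, of i] fun_cong[OF st, of i] pc i
    by (auto simp: is_projection_def pr_mult prod_star_def pr_carrier)
  thus "p \<in> carrier (prod_ring I R) \<and> (\<forall>i\<in>I. is_projection (R i) (s i) (p i))" using pc by auto
next
  assume a: "p \<in> carrier (prod_ring I R) \<and> (\<forall>i\<in>I. is_projection (R i) (s i) (p i))"
  hence ext: "p \<in> extensional I" by (auto simp: pr_carrier PiE_def)
  have "p \<otimes>\<^bsub>prod_ring I R\<^esub> p = p" "prod_star I s p = p"
  proof -
    show "p \<otimes>\<^bsub>prod_ring I R\<^esub> p = p" using a ext
      by (auto simp: pr_mult is_projection_def extensional_def intro!: ext)
    show "prod_star I s p = p" using a ext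
      by (auto simp: prod_star_def is_projection_def extensional_def intro!: ext)
  qed
  thus "is_projection (prod_ring I R) (prod_star I s) p" using a by (auto simp: is_projection_def)
qed

lemma build_plus:
  assumes rings: "\<forall>i\<in>I. ring (R i)"
    and h: "\<forall>i\<in>I. \<exists>u p. u \<in> Units (R i) \<and> is_projection (R i) (s i) p \<and> x i = u \<oplus>\<^bsub>R i\<^esub> p"
    and x: "x \<in> carrier (prod_ring I R)"
  shows "weakly_star_clean_elem (prod_ring I R) (prod_star I s) x"
proof -
  from h obtain fu fp where f: "\<forall>i\<in>I. fu i \<in> Units (R i) \<and> is_projection (R i) (s i) (fp i) \<and> x i = fu i \<oplus>\<^bsub>R i\<^esub> fp i"
    by metis
  let ?u = "\<lambda>i\<in>I. fu i" and ?p = "\<lambda>i\<in>I. fp i"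
  have u: "?u \<in> Units (prod_ring I R)"
  proof -
    have "?u \<in> carrier (prod_ring I R) \<and> (\<forall>i\<in>I. ?u i \<in> Units (R i))"
      using f by (auto simp: pr_carrier Units_def)
    thus ?thesis using prod_units by blast
  qed
  have p: "is_projection (prod_ring I R) (prod_star I s) ?p"
    using f by (subst prod_proj) (auto simp: pr_carrier is_projection_def)
  have "x = ?u \<oplus>\<^bsub>prod_ring I R\<^esub> ?p" using f x
    by (auto simp: pr_add pr_carrier PiE_def extensional_def intro!: ext)
  thus ?thesis using u p unfolding weakly_star_clean_elem_def by blast
qed

lemma build_minus:
  assumes rings: "\<forall>i\<in>I. ring (R i)"
    and h: "\<forall>i\<in>I. \<exists>u p. u \<in> Units (R i) \<and> is_projection (R i) (s i) p \<and> x i = u \<ominus>\<^bsub>R i\<^esub> p"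
    and x: "x \<in> carrier (prod_ring I R)"
  shows "weakly_star_clean_elem (prod_ring I R) (prod_star I s) x"
proof -
  from h obtain fu fp where f: "\<forall>i\<in>I. fu i \<in> Units (R i) \<and> is_projection (R i) (s i) (fp i) \<and> x i = fu i \<ominus>\<^bsub>R i\<^esub> fp i"
    by metis
  let ?u = "\<lambda>i\<in>I. fu i" and ?p = "\<lambda>i\<in>I. fp i"
  have u: "?u \<in> Units (prod_ring I R)"
  proof -
    have "?u \<in> carrier (prod_ring I R) \<and> (\<forall>i\<in>I. ?u i \<in> Units (R i))"
      using f by (auto simp: pr_carrier Units_def)
    thus ?thesis using prod_units by blast
  qed
  have p: "is_projection (prod_ring I R) (prod_star I s) ?p"
    using f by (subst prod_proj) (auto simp: pr_carrier is_projection_def)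
  have pc: "?p \<in> carrier (prod_ring I R)" using p by (simp add: is_projection_def)
  have "x = ?u \<ominus>\<^bsub>prod_ring I R\<^esub> ?p" using f x
    by (auto simp: prod_minus[OF rings pc] pr_carrier PiE_def extensional_def intro!: ext)
  thus ?thesis using u p unfolding weakly_star_clean_elem_def by blast
qed

lemma neg_swap:
  fixes R (structure)
  assumes "ring R" "b \<in> carrier R" "u \<in> carrier R" "p \<in> carrier R"
    and "\<ominus>\<^bsub>R\<^esub> b = u \<ominus>\<^bsub>R\<^esub> p"
  shows "b = (\<ominus>\<^bsub>R\<^esub> u) \<oplus>\<^bsub>R\<^esub> p"
proof -
  interpret ring R by fact
  have nb: "\<ominus> b = u \<oplus> \<ominus> p" using assms(5) by (simp add: a_minus_def)
  have "b = \<ominus> (\<ominus> b)" using assms(2) by simp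
  also have "\<dots> = \<ominus> (u \<oplus> \<ominus> p)" by (simp only: nb)
  also have "\<dots> = \<ominus> u \<oplus> p" using assms by (simp add: minus_add)
  finally show ?thesis .
qed

lemma neg_swap2:
  fixes R (structure)
  assumes "ring R" "x \<in> carrier R" "v \<in> carrier R" "q \<in> carrier R"
    and "\<ominus>\<^bsub>R\<^esub> x = v \<oplus>\<^bsub>R\<^esub> q"
  shows "x = (\<ominus>\<^bsub>R\<^esub> v) \<ominus>\<^bsub>R\<^esub> q"
proof -
  interpret ring R by fact
  have "x = \<ominus> (\<ominus> x)" using assms(2) by simp
  also have "\<dots> = \<ominus> (v \<oplus> q)" by (simp only: assms(5))
  also have "\<dots> = \<ominus> v \<ominus> q" using assms by (simp add: minus_add a_minus_def)
  finally show ?thesis .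
qed

lemma W_split:
  assumes rings: "\<forall>i\<in>I. ring (R i)"
    and W: "weakly_star_clean (prod_ring I R) (prod_star I s)"
    and x: "x \<in> carrier (prod_ring I R)"
  shows "(\<forall>j\<in>I. \<exists>u\<in>Units (R j). \<exists>p. is_projection (R j) (s j) p \<and> x j = u \<oplus>\<^bsub>R j\<^esub> p) \<or>
         (\<forall>j\<in>I. \<exists>u\<in>Units (R j). \<exists>p. is_projection (R j) (s j) p \<and> x j = u \<ominus>\<^bsub>R j\<^esub> p)"
proof -
  obtain u p where u: "u \<in> Units (prod_ring I R)" and p: "is_projection (prod_ring I R) (prod_star I s) p"
    and e: "x = u \<oplus>\<^bsub>prod_ring I R\<^esub> p \<or> x = u \<ominus>\<^bsub>prod_ring I R\<^esub> p"
    using W x by (auto simp: weakly_star_clean_def weakly_star_clean_elem_def)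
  have uc: "\<forall>j\<in>I. u j \<in> Units (R j)" using u by (simp add: prod_units)
  have pc: "p \<in> carrier (prod_ring I R)" and pp: "\<forall>j\<in>I. is_projection (R j) (s j) (p j)"
    using p by (auto simp: prod_proj)
  from e show ?thesis
  proof
    assume e: "x = u \<oplus>\<^bsub>prod_ring I R\<^esub> p"
    hence ej: "\<forall>j\<in>I. x j = u j \<oplus>\<^bsub>R j\<^esub> p j" by (simp add: pr_add)
    show ?thesis using uc pp ej by blast
  next
    assume e: "x = u \<ominus>\<^bsub>prod_ring I R\<^esub> p"
    hence ej: "\<forall>j\<in>I. x j = u j \<ominus>\<^bsub>R j\<^esub> p j" by (simp add: prod_minus[OF rings pc])
    show ?thesis using uc pp ej by blast
  qed
qed

theorem theorem4p11:
  fixes I :: "'i set" and R :: "'i \<Rightarrow> ('a, 'b) ring_scheme" and s :: "'i \<Rightarrow> 'a \<Rightarrow> 'a"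
  assumes "\<forall>i\<in>I. star_ring (R i) (s i)"
  shows "weakly_star_clean (prod_ring I R) (prod_star I s) \<longleftrightarrow>
           (\<forall>i\<in>I. weakly_star_clean (R i) (s i)) \<and>
           (\<forall>i\<in>I. \<forall>j\<in>I. \<not> star_clean (R i) (s i) \<and> \<not> star_clean (R j) (s j) \<longrightarrow> i = j)"
proof -
  have rings: "\<forall>i\<in>I. ring (R i)" using assms by (simp add: star_ring_def)
  show ?thesis
  proof
    assume W: "weakly_star_clean (prod_ring I R) (prod_star I s)"
    have A: "weakly_star_clean (R i) (s i)" if i: "i \<in> I" for i
      unfolding weakly_star_clean_def
    proof
      fix a assume a: "a \<in> carrier (R i)"
      define x where "x = (\<lambda>j\<in>I. if j = i then a else \<zero>\<^bsub>R j\<^esub>)"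
      have xc: "x \<in> carrier (prod_ring I R)" unfolding pr_carrier
      proof (rule PiE_I)
        fix k assume k: "k \<in> I"
        show "x k \<in> carrier (R k)"
          using a rings k by (auto simp: x_def rh_zero_closed)
      next
        fix k assume "k \<notin> I" thus "x k = undefined" by (simp add: x_def)
      qed
      have xi: "x i = a" using i by (simp add: x_def)
      from W_split[OF rings W xc] i
      have "\<exists>u\<in>Units (R i). \<exists>p. is_projection (R i) (s i) p \<and> (x i = u \<oplus>\<^bsub>R i\<^esub> p \<or> x i = u \<ominus>\<^bsub>R i\<^esub> p)"
        by blast
      thus "weakly_star_clean_elem (R i) (s i) a"
        unfolding weakly_star_clean_elem_def xi .
    qed
    have B: "i = j" if i: "i \<in> I" and j: "j \<in> I" and ni: "\<not> star_clean (R i) (s i)"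
      and nj: "\<not> star_clean (R j) (s j)" for i j
    proof (rule ccontr)
      assume ij: "i \<noteq> j"
      from ni obtain a where a: "a \<in> carrier (R i)"
        and na: "\<not> (\<exists>u\<in>Units (R i). \<exists>p. is_projection (R i) (s i) p \<and> a = u \<oplus>\<^bsub>R i\<^esub> p)"
        unfolding star_clean_def by blast
      from nj obtain b where b: "b \<in> carrier (R j)"
        and nb: "\<not> (\<exists>u\<in>Units (R j). \<exists>p. is_projection (R j) (s j) p \<and> b = u \<oplus>\<^bsub>R j\<^esub> p)"
        unfolding star_clean_def by blast
      define x where "x = (\<lambda>k\<in>I. if k = i then a else if k = j then \<ominus>\<^bsub>R j\<^esub> b else \<zero>\<^bsub>R k\<^esub>)"
      have xc: "x \<in> carrier (prod_ring I R)" unfolding pr_carrier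
      proof (rule PiE_I)
        fix k assume k: "k \<in> I"
        show "x k \<in> carrier (R k)"
          using a b rings k j by (auto simp: x_def rh_zero_closed rh_neg_closed)
      next
        fix k assume "k \<notin> I" thus "x k = undefined" by (simp add: x_def)
      qed
      have xi: "x i = a" using i by (simp add: x_def)
      have xj: "x j = \<ominus>\<^bsub>R j\<^esub> b" using j ij by (simp add: x_def)
      from W_split[OF rings W xc] show False
      proof
        assume "\<forall>k\<in>I. \<exists>u\<in>Units (R k). \<exists>p. is_projection (R k) (s k) p \<and> x k = u \<oplus>\<^bsub>R k\<^esub> p"
        hence "\<exists>u\<in>Units (R i). \<exists>p. is_projection (R i) (s i) p \<and> x i = u \<oplus>\<^bsub>R i\<^esub> p"
          using i by blast
        thus False using na unfolding xi by blast
      next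
        assume "\<forall>k\<in>I. \<exists>u\<in>Units (R k). \<exists>p. is_projection (R k) (s k) p \<and> x k = u \<ominus>\<^bsub>R k\<^esub> p"
        hence "\<exists>u\<in>Units (R j). \<exists>p. is_projection (R j) (s j) p \<and> x j = u \<ominus>\<^bsub>R j\<^esub> p"
          using j by blast
        then obtain u p where u: "u \<in> Units (R j)" and p: "is_projection (R j) (s j) p"
          and e: "\<ominus>\<^bsub>R j\<^esub> b = u \<ominus>\<^bsub>R j\<^esub> p" unfolding xj by blast
        have rj: "ring (R j)" using rings j by blast
        have uc: "u \<in> carrier (R j)" using u by (simp add: Units_def)
        have pc: "p \<in> carrier (R j)" using p by (simp add: is_projection_def)
        have "b = (\<ominus>\<^bsub>R j\<^esub> u) \<oplus>\<^bsub>R j\<^esub> p" by (rule neg_swap[OF rj b uc pc e])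
        moreover have "\<ominus>\<^bsub>R j\<^esub> u \<in> Units (R j)" by (rule ring_units_neg[OF rj u])
        ultimately show False using nb p by blast
      qed
    qed
    show "(\<forall>i\<in>I. weakly_star_clean (R i) (s i)) \<and>
           (\<forall>i\<in>I. \<forall>j\<in>I. \<not> star_clean (R i) (s i) \<and> \<not> star_clean (R j) (s j) \<longrightarrow> i = j)"
      using A B by blast
  next
    assume H: "(\<forall>i\<in>I. weakly_star_clean (R i) (s i)) \<and>
           (\<forall>i\<in>I. \<forall>j\<in>I. \<not> star_clean (R i) (s i) \<and> \<not> star_clean (R j) (s j) \<longrightarrow> i = j)"
    have H1: "\<forall>i\<in>I. weakly_star_clean (R i) (s i)" using H by (rule conjunct1)
    have H2: "\<And>i j. i \<in> I \<Longrightarrow> j \<in> I \<Longrightarrow> \<not> star_clean (R i) (s i) \<Longrightarrow> \<not> star_clean (R j) (s j) \<Longrightarrow> i = j"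
      using H by blast
    show "weakly_star_clean (prod_ring I R) (prod_star I s)"
      unfolding weakly_star_clean_def
    proof
      fix x assume x: "x \<in> carrier (prod_ring I R)"
      have xi: "\<And>i. i \<in> I \<Longrightarrow> x i \<in> carrier (R i)" using x by (auto simp: pr_carrier)
      have sc: "\<exists>u p. u \<in> Units (R j) \<and> is_projection (R j) (s j) p \<and> y = u \<oplus>\<^bsub>R j\<^esub> p"
        if "star_clean (R j) (s j)" "y \<in> carrier (R j)" for j y
        using that unfolding star_clean_def by blast
      show "weakly_star_clean_elem (prod_ring I R) (prod_star I s) x"
      proof (cases "\<forall>i\<in>I. star_clean (R i) (s i)")
        case True
        show ?thesis
        proof (rule build_plus[OF rings _ x], intro ballI)
          fix j assume j: "j \<in> I"
          show "\<exists>u p. u \<in> Units (R j) \<and> is_projection (R j) (s j) p \<and> x j = u \<oplus>\<^bsub>R j\<^esub> p"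
            using sc[of j "x j"] True j xi[OF j] by blast
        qed
      next
        case False
        then obtain b where b: "b \<in> I" "\<not> star_clean (R b) (s b)" by blast
        have others: "\<And>j. j \<in> I \<Longrightarrow> j \<noteq> b \<Longrightarrow> star_clean (R j) (s j)"
          using H2 b by blast
        have "weakly_star_clean_elem (R b) (s b) (x b)"
          using H1 b(1) xi[OF b(1)] unfolding weakly_star_clean_def by blast
        then obtain u p where u: "u \<in> Units (R b)" and p: "is_projection (R b) (s b) p"
          and e: "x b = u \<oplus>\<^bsub>R b\<^esub> p \<or> x b = u \<ominus>\<^bsub>R b\<^esub> p"
          unfolding weakly_star_clean_elem_def by blast
        from e show ?thesis
        proof
          assume e: "x b = u \<oplus>\<^bsub>R b\<^esub> p"
          show ?thesis
          proof (rule build_plus[OF rings _ x], intro ballI)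
            fix j assume j: "j \<in> I"
            show "\<exists>u p. u \<in> Units (R j) \<and> is_projection (R j) (s j) p \<and> x j = u \<oplus>\<^bsub>R j\<^esub> p"
            proof (cases "j = b")
              case True thus ?thesis using u p e by blast
            next
              case False thus ?thesis using sc[OF others[OF j False] xi[OF j]] by blast
            qed
          qed
        next
          assume e: "x b = u \<ominus>\<^bsub>R b\<^esub> p"
          show ?thesis
          proof (rule build_minus[OF rings _ x], intro ballI)
            fix j assume j: "j \<in> I"
            show "\<exists>u p. u \<in> Units (R j) \<and> is_projection (R j) (s j) p \<and> x j = u \<ominus>\<^bsub>R j\<^esub> p"
            proof (cases "j = b")
              case True thus ?thesis using u p e by blast
            next
              case False
              have rj: "ring (R j)" using rings j by blast
              have "\<ominus>\<^bsub>R j\<^esub> x j \<in> carrier (R j)" by (rule rh_neg_closed[OF rj xi[OF j]])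
              then obtain v q where v: "v \<in> Units (R j)" and q: "is_projection (R j) (s j) q"
                and e2: "\<ominus>\<^bsub>R j\<^esub> x j = v \<oplus>\<^bsub>R j\<^esub> q"
                using sc[OF others[OF j False]] by blast
              have vc: "v \<in> carrier (R j)" using v by (simp add: Units_def)
              have qc: "q \<in> carrier (R j)" using q by (simp add: is_projection_def)
              have "x j = (\<ominus>\<^bsub>R j\<^esub> v) \<ominus>\<^bsub>R j\<^esub> q"
                by (rule neg_swap2[OF rj xi[OF j] vc qc e2])
              moreover have "\<ominus>\<^bsub>R j\<^esub> v \<in> Units (R j)" by (rule ring_units_neg[OF rj v])
              ultimately show ?thesis using q by blast
            qed
          qed
        qed
      qed
    qed
  qed
qed

end
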